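(* Let $(X,d)$, $\mu$, $Y$ (countable), $f:X\to Y$ be as in the standing setting, and let $\kappa:\mathbb{Z}^+\to\mathbb{Z}^+$ satisfy $\sum_{n=1}^\infty\rho^{\kappa(n)}=\infty$ for every $0<\rho\le1$. Let $\{z_n\}$ be generated by $\mathcal{S}(\kappa,\Phi)$ where $\Phi$ is the non-modal count heuristic $\Phi(x,S)=|V_S(x)|-\operatorname{modefreq}_f(V_S(x))$ with $V_S(x)$ the set of Voronoi neighbors of $x$ with respect to $S$. If $x\in X$ is contained in an $f$-contiguous component of positive $\mu$-measure, then $\zeta_n(x)\to f(x)$ with probability one.
   Context: Standing setting: $(X,d)$ metric space with probability measure $\mu$; $Y$ countable; $f:X\to Y$; $X_y=f^{-1}(y)$; $B_\epsilon(x)$ open ball; $\operatorname{supp}(\mu)=\{x:\mu(B_\epsilon(x))>0\ \forall\epsilon>0\}$. A point $b$ is an $f$-boundary point iff $\mu(B_\epsilon(b)\setminus X_{f(b)})>0$ for all $\epsilon>0$. A set $R\subseteq X$ is $f$-connected iff it is connected and $R\subseteq X_y$ for some $y\in Y$; it is $f$-contiguous iff it is $f$-connected, $R\subseteq\operatorname{supp}(\mu)$, and $R$ contains no $f$-boundary points. An $f$-contiguous component is an $f$-contiguous set maximal under inclusion. Voronoi neighbors: $v\in S$ is a Voronoi neighbor of $x$ w.r.t. $S$ iff there is $c\in X$ with $d(x,c)<d(v,c)\le d(s,c)$ for all $s\in S$; $V_S(x)$ is the set of these. For finite $A\subseteq X$, $\operatorname{modefreq}_f(A)=\max_{y\in Y}|A\cap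 X_y|$ (and $0$ if $A=\emptyset$). Process $\mathcal{S}(\kappa,\Phi)$: $Z_0=\emptyset$; at step $n$ draw $\kappa(n)$ candidates i.i.d. from $\mu$, independent of the past, set $z_n$ to a candidate maximizing $\Phi(\cdot,Z_{n-1})$ (ties uniformly at random), $Z_n=\{z_1,\dots,z_n\}$. Nearest neighbor prediction: $\zeta_n(x)=f(z_\iota)$, $\iota=\arg\min_{i\le n}d(x,z_i)$, ties uniformly at random. *)

theory Defs
  imports "HOL-Probability.Probability"
begin

definition supp_measure :: "'a::metric_space measure \<Rightarrow> 'a set" where
  "supp_measure M = {x. \<forall>e>0. emeasure M (ball x e) > 0}"

definition f_boundary_point :: "'a::metric_space measure \<Rightarrow> ('a \<Rightarrow> 'b) \<Rightarrow> 'a \<Rightarrow> bool" where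
  "f_boundary_point M f b \<longleftrightarrow> (\<forall>e>0. emeasure M (ball b e - f -` {f b}) > 0)"

definition f_connected :: "('a::topological_space \<Rightarrow> 'b) \<Rightarrow> 'a set \<Rightarrow> bool" where
  "f_connected f R \<longleftrightarrow> connected R \<and> (\<exists>y. R \<subseteq> f -` {y})"

definition f_contiguous :: "'a::metric_space measure \<Rightarrow> ('a \<Rightarrow> 'b) \<Rightarrow> 'a set \<Rightarrow> bool" where
  "f_contiguous M f R \<longleftrightarrow> f_connected f R \<and> R \<subseteq> supp_measure M
      \<and> (\<forall>b\<in>R. \<not> f_boundary_point M f b)"

definition f_contiguous_component :: "'a::metric_space measure \<Rightarrow> ('a \<Rightarrow> 'b) \<Rightarrow> 'a set \<Rightarrow> bool" where
  "f_contiguous_component M f R \<longleftrightarrow> f_contiguous M f R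
      \<and> (\<forall>R'. f_contiguous M f R' \<and> R \<subseteq> R' \<longrightarrow> R' = R)"

definition voronoi_neighbors :: "'a::metric_space set \<Rightarrow> 'a \<Rightarrow> 'a set" where
  "voronoi_neighbors S x = {v\<in>S. \<exists>c. dist x c < dist v c \<and> (\<forall>s\<in>S. dist v c \<le> dist s c)}"

definition modefreq :: "('a \<Rightarrow> 'b) \<Rightarrow> 'a set \<Rightarrow> nat" where
  "modefreq f A = (if A = {} then 0 else (SUP y. card (A \<inter> f -` {y})))"

definition nonmodal_count :: "('a::metric_space \<Rightarrow> 'b) \<Rightarrow> 'a \<Rightarrow> 'a set \<Rightarrow> int" where
  "nonmodal_count f x S =
     int (card (voronoi_neighbors S x)) - int (modefreq f (voronoi_neighbors S x))"

text \<open>Uniform random tie breaking: given a finite set of admissible indices and a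
  number u uniformly distributed in [0,1), choose the floor(u * card I)-th element
  of I (in increasing order); this is uniform on I.\<close>
definition pick_uniform :: "nat set \<Rightarrow> real \<Rightarrow> nat" where
  "pick_uniform I u = sorted_list_of_set I ! nat \<lfloor>u * real (card I)\<rfloor>"

definition select_step :: "('a \<Rightarrow> 'a set \<Rightarrow> int) \<Rightarrow> (nat \<Rightarrow> 'a) \<Rightarrow> nat \<Rightarrow> 'a set \<Rightarrow> real \<Rightarrow> 'a" where
  "select_step \<Phi> cs k S u =
     cs (pick_uniform {i. i < k \<and> (\<forall>j<k. \<Phi> (cs j) S \<le> \<Phi> (cs i) S)} u)"

text \<open>zs n = [z_1, ..., z_n].  cand n i is the i-th candidate at step n (only i < kappa n
  are used), U n is the tie-breaking variable of step n.\<close>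
primrec proc_points :: "('a \<Rightarrow> 'a set \<Rightarrow> int) \<Rightarrow> (nat \<Rightarrow> nat) \<Rightarrow> (nat \<Rightarrow> nat \<Rightarrow> 'a)
      \<Rightarrow> (nat \<Rightarrow> real) \<Rightarrow> nat \<Rightarrow> 'a list" where
  "proc_points \<Phi> \<kappa> cand U 0 = []"
| "proc_points \<Phi> \<kappa> cand U (Suc n) =
     proc_points \<Phi> \<kappa> cand U n
     @ [select_step \<Phi> (cand (Suc n)) (\<kappa> (Suc n)) (set (proc_points \<Phi> \<kappa> cand U n)) (U (Suc n))]"

definition nn_predict :: "('a::metric_space \<Rightarrow> 'b) \<Rightarrow> 'a list \<Rightarrow> real \<Rightarrow> 'a \<Rightarrow> 'b" where
  "nn_predict f zs w x =
     f (zs ! pick_uniform {i. i < length zs \<and> (\<forall>j<length zs. dist x (zs ! i) \<le> dist x (zs ! j))} w)"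

text \<open>The underlying probability space: all candidates i.i.d. from M, and two
  independent i.i.d. sequences of Uniform[0,1) tie-breaking variables
  (one for the selection step, one for the prediction).\<close>
definition unif01 :: "real measure" where
  "unif01 = uniform_measure lborel {0..<1}"

definition process_space :: "'a measure
      \<Rightarrow> ((nat \<Rightarrow> nat \<Rightarrow> 'a) \<times> (nat \<Rightarrow> real) \<times> (nat \<Rightarrow> real)) measure" where
  "process_space M =
     (\<Pi>\<^sub>M n\<in>(UNIV::nat set). \<Pi>\<^sub>M i\<in>(UNIV::nat set). M)
     \<Otimes>\<^sub>M ((\<Pi>\<^sub>M n\<in>(UNIV::nat set). unif01) \<Otimes>\<^sub>M (\<Pi>\<^sub>M n\<in>(UNIV::nat set). unif01))"

definition zeta :: "('a::metric_space \<Rightarrow> 'b) \<Rightarrow> ('a \<Rightarrow> 'a set \<Rightarrow> int) \<Rightarrow> (nat \<Rightarrow> nat)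
      \<Rightarrow> ((nat \<Rightarrow> nat \<Rightarrow> 'a) \<times> (nat \<Rightarrow> real) \<times> (nat \<Rightarrow> real)) \<Rightarrow> nat \<Rightarrow> 'a \<Rightarrow> 'b" where
  "zeta f \<Phi> \<kappa> \<omega> n x =
     nn_predict f (proc_points \<Phi> \<kappa> (fst \<omega>) (fst (snd \<omega>)) n) (snd (snd \<omega>) n) x"

end

theory Submission
  imports Defs
begin

lemma pick_uniform_in:
  assumes "finite I" "I \<noteq> {}" "0 \<le> u" "u < 1"
  shows "pick_uniform I u \<in> I"
proof -
  have c: "card I > 0" using assms by auto
  have "u * real (card I) < real (card I)" using assms c by simp
  hence "\<lfloor>u * real (card I)\<rfloor> < int (card I)" by (simp add: floor_less_iff)
  moreover have "0 \<le> \<lfloor>u * real (card I)\<rfloor>" using assms by simp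
  ultimately have "nat \<lfloor>u * real (card I)\<rfloor> < length (sorted_list_of_set I)" by (simp add: nat_less_iff)
  hence "sorted_list_of_set I ! nat \<lfloor>u * real (card I)\<rfloor> \<in> set (sorted_list_of_set I)" by (rule nth_mem)
  thus ?thesis using assms(1) unfolding pick_uniform_def by simp
qed

lemma select_step_in:
  assumes "k \<ge> 1" "0 \<le> u" "u < 1"
  shows "\<exists>j<k. select_step \<Phi> cs k S u = cs j"
proof -
  let ?I = "{i. i < k \<and> (\<forall>j<k. \<Phi> (cs j) S \<le> \<Phi> (cs i) S)}"
  have fin: "finite ((\<lambda>j. \<Phi> (cs j) S) ` {..<k})" by simp
  have "0 \<in> {..<k}" using assms by simp
  hence ne: "(\<lambda>j. \<Phi> (cs j) S) ` {..<k} \<noteq> {}" by blast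
  obtain i where i: "i < k" "\<Phi> (cs i) S = Max ((\<lambda>j. \<Phi> (cs j) S) ` {..<k})"
    using Max_in[OF fin ne] by auto
  have "i \<in> ?I" using i Max_ge[OF fin] by auto
  hence "?I \<noteq> {}" by blast
  hence "pick_uniform ?I u \<in> ?I" using assms by (intro pick_uniform_in) auto
  thus ?thesis unfolding select_step_def by auto
qed

lemma pp_length: "length (proc_points \<Phi> \<kappa> c U n) = n"
  by (induction n) auto

lemma pp_nth: "k < n \<Longrightarrow> proc_points \<Phi> \<kappa> c U n ! k =
   select_step \<Phi> (c (Suc k)) (\<kappa> (Suc k)) (set (proc_points \<Phi> \<kappa> c U k)) (U (Suc k))"
proof (induction n)
  case 0 then show ?case by simp
next
  case (Suc n)
  show ?case
  proof (cases "k < n")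
    case True
    then show ?thesis using Suc by (simp add: nth_append pp_length)
  next
    case False
    then have "k = n" using Suc by simp
    then show ?thesis by (simp add: nth_append pp_length)
  qed
qed

lemma pp_elem: "k < n \<Longrightarrow> \<exists>j. proc_points \<Phi> \<kappa> c U n ! k = c (Suc k) j"
  unfolding pp_nth select_step_def by blast

lemma prod_exp_bound:
  fixes a :: "nat \<Rightarrow> real"
  assumes "\<And>k. 0 \<le> a k" "\<And>k. a k \<le> 1"
  shows "(\<Prod>k\<le>N. 1 - a k) \<le> exp (- (\<Sum>k\<le>N. a k))"
proof (induction N)
  case 0 show ?case using exp_ge_add_one_self[of "- a 0"] by simp
next
  case (Suc N)
  have "(\<Prod>k\<le>Suc N. 1 - a k) = (\<Prod>k\<le>N. 1 - a k) * (1 - a (Suc N))" by simp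
  also have "\<dots> \<le> exp (- (\<Sum>k\<le>N. a k)) * exp (- a (Suc N))"
    apply (rule mult_mono)
    using Suc.IH assms exp_ge_add_one_self[of "- a (Suc N)"] by auto
  also have "\<dots> = exp (- (\<Sum>k\<le>Suc N. a k))" by (simp add: exp_add[symmetric])
  finally show ?case .
qed

lemma measure_PiM_Collect_UNIV:
  assumes "\<And>i. prob_space (M i)" "finite J" "\<And>i. i \<in> J \<Longrightarrow> X i \<in> sets (M i)"
  shows "measure (PiM UNIV M) {x\<in>space (PiM UNIV M). \<forall>i\<in>J. x i \<in> X i} = (\<Prod>i\<in>J. measure (M i) (X i))"
proof -
  interpret product_prob_space M UNIV
    by (intro product_prob_space.intro product_sigma_finite.intro product_prob_space_axioms.intro
          prob_space_imp_sigma_finite assms)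
  have "{x\<in>space (PiM UNIV M). \<forall>i\<in>J. x i \<in> X i} = prod_emb UNIV M J (PiE J X)"
    unfolding prod_emb_def by (auto simp: space_PiM Pi_iff)
  thus ?thesis using measure_PiM_emb[of J X] assms by simp
qed

lemma AE_pair_fst:
  assumes "sigma_finite_measure B" "AE x in A. P x"
  shows "AE z in A \<Otimes>\<^sub>M B. P (fst z)"
proof -
  from assms(2) obtain N where N: "N \<in> null_sets A" "{x\<in>space A. \<not> P x} \<subseteq> N"
    by (auto simp: eventually_ae_filter)
  interpret B: sigma_finite_measure B by fact
  have "emeasure (A \<Otimes>\<^sub>M B) (N \<times> space B) = emeasure A N * emeasure B (space B)"
    using N by (intro B.emeasure_pair_measure_Times) auto
  hence "N \<times> space B \<in> null_sets (A \<Otimes>\<^sub>M B)" using N by (auto simp: null_sets_def)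
  then show ?thesis by (rule AE_I') (use N in \<open>auto simp: space_pair_measure\<close>)
qed

lemma AE_pair_snd:
  assumes "sigma_finite_measure B" "AE x in B. P x"
  shows "AE z in A \<Otimes>\<^sub>M B. P (snd z)"
proof -
  from assms(2) obtain N where N: "N \<in> null_sets B" "{x\<in>space B. \<not> P x} \<subseteq> N"
    by (auto simp: eventually_ae_filter)
  interpret B: sigma_finite_measure B by fact
  have "emeasure (A \<Otimes>\<^sub>M B) (space A \<times> N) = emeasure A (space A) * emeasure B N"
    using N by (intro B.emeasure_pair_measure_Times) auto
  hence "space A \<times> N \<in> null_sets (A \<Otimes>\<^sub>M B)" using N by (auto simp: null_sets_def)
  then show ?thesis by (rule AE_I') (use N in \<open>auto simp: space_pair_measure\<close>)
qed

lemma det: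
  fixes x :: "'a::metric_space" and f :: "'a \<Rightarrow> 'b"
  assumes e: "e > 0" and cN: "\<forall>n i. c n i \<notin> ball x e - f -` {f x}"
    and U: "\<forall>n. U n \<in> {0..<1}" and W: "0 \<le> w" "w < 1"
    and kp: "\<forall>n\<ge>1. \<kappa> n \<ge> 1" and cm: "\<forall>i<\<kappa> (Suc m). c (Suc m) i \<in> ball x (e/2)"
    and nm: "Suc m \<le> n"
  shows "nn_predict f (proc_points \<Phi> \<kappa> c U n) w x = f x"
proof -
  define zs where "zs = proc_points \<Phi> \<kappa> c U n"
  have len: "length zs = n" by (simp add: zs_def pp_length)
  have z1: "zs ! m = select_step \<Phi> (c (Suc m)) (\<kappa> (Suc m)) (set (proc_points \<Phi> \<kappa> c U m)) (U (Suc m))"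
    using nm by (simp add: zs_def pp_nth)
  obtain j where j: "j < \<kappa> (Suc m)"
    "select_step \<Phi> (c (Suc m)) (\<kappa> (Suc m)) (set (proc_points \<Phi> \<kappa> c U m)) (U (Suc m)) = c (Suc m) j"
    using select_step_in[where k="\<kappa> (Suc m)" and u="U (Suc m)" and \<Phi>=\<Phi> and cs="c (Suc m)"
        and S="set (proc_points \<Phi> \<kappa> c U m)"] kp U by auto
  have zm: "dist x (zs ! m) < e/2" using cm j z1 by auto
  define I where "I = {i. i < length zs \<and> (\<forall>j<length zs. dist x (zs ! i) \<le> dist x (zs ! j))}"
  have fin: "finite ((\<lambda>j. dist x (zs ! j)) ` {..<n})" by simp
  have "m \<in> {..<n}" using nm by simp
  hence ne: "(\<lambda>j. dist x (zs ! j)) ` {..<n} \<noteq> {}" by blast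
  obtain i where i: "i < n" "dist x (zs!i) = Min ((\<lambda>j. dist x (zs ! j)) ` {..<n})"
    using Min_in[OF fin ne] by auto
  have "i \<in> I" using i Min_le[OF fin] len by (auto simp: I_def)
  moreover have "finite I" by (rule finite_subset[of _ "{..<length zs}"]) (auto simp: I_def)
  ultimately have "pick_uniform I w \<in> I" using W by (intro pick_uniform_in) auto
  then obtain p where p: "p = pick_uniform I w" "p < n" "dist x (zs!p) \<le> dist x (zs!m)"
    using nm len by (auto simp: I_def)
  hence "dist x (zs!p) < e" using zm e by linarith
  moreover obtain j' where "zs ! p = c (Suc p) j'" using pp_elem p zs_def by blast
  ultimately have fp: "f (zs!p) = f x" using cN by auto
  have "nn_predict f zs w x = f (zs ! pick_uniform I w)" by (simp add: nn_predict_def I_def)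
  thus ?thesis using fp p zs_def by simp
qed

theorem theorem3:
  fixes M :: "'a::metric_space measure"
    and f :: "'a \<Rightarrow> 'b::countable"
    and \<kappa> :: "nat \<Rightarrow> nat"
    and x :: 'a
  assumes prob: "prob_space M"
    and borel: "sets M = sets borel"
    and f_meas: "f \<in> M \<rightarrow>\<^sub>M count_space UNIV"
    and kappa_pos: "\<forall>n\<ge>1. \<kappa> n \<ge> 1"
    and kappa_div: "\<forall>\<rho>::real. 0 < \<rho> \<and> \<rho> \<le> 1 \<longrightarrow> \<not> summable (\<lambda>n. \<rho> ^ \<kappa> (Suc n))"
    and comp: "f_contiguous_component M f C"
    and pos: "emeasure M C > 0"
    and xC: "x \<in> C"
  shows "AE \<omega> in process_space M.
           eventually (\<lambda>n. zeta f (nonmodal_count f) \<kappa> \<omega> n x = f x) sequentially"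
proof -
  interpret M: prob_space M by (rule prob)
  have spM: "space M = UNIV" using sets_eq_imp_space_eq[OF borel] by simp
  have xnb: "\<not> f_boundary_point M f x" and xs: "x \<in> supp_measure M"
    using comp xC unfolding f_contiguous_component_def f_contiguous_def by auto
  obtain e where e: "e > 0" "emeasure M (ball x e - f -` {f x}) = 0"
    using xnb unfolding f_boundary_point_def by (auto simp: not_less)
  define B where "B = ball x (e/2)"
  define Nl where "Nl = ball x e - f -` {f x}"
  have Bsets[measurable]: "B \<in> sets M" using borel by (simp add: B_def)
  have fsets: "f -` {f x} \<in> sets M" using measurable_sets[OF f_meas, of "{f x}"] spM by simp
  have "ball x e \<in> sets M" using borel by simp
  hence Nlsets: "Nl \<in> sets M" using fsets by (auto simp: Nl_def)
  have Nlnull: "Nl \<in> null_sets M" using e Nlsets by (simp add: Nl_def null_sets_def)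
  define M2 where "M2 = PiM UNIV (\<lambda>_::nat. M)"
  define M1 where "M1 = PiM UNIV (\<lambda>_::nat. M2)"
  define Mu where "Mu = PiM UNIV (\<lambda>_::nat. unif01)"
  have pu: "prob_space unif01" unfolding unif01_def by (intro prob_space_uniform_measure) auto
  have p2: "prob_space M2" unfolding M2_def by (intro prob_space_PiM prob)
  have p1: "prob_space M1" unfolding M1_def by (intro prob_space_PiM p2)
  have pMu: "prob_space Mu" unfolding Mu_def by (intro prob_space_PiM pu)
  have pMuu: "prob_space (Mu \<Otimes>\<^sub>M Mu)" by (intro prob_space_pair pMu)
  have ps: "process_space M = M1 \<Otimes>\<^sub>M (Mu \<Otimes>\<^sub>M Mu)"
    unfolding process_space_def M1_def M2_def Mu_def ..
  have AE1: "AE c in M1. \<forall>n i. c n i \<notin> Nl"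
  proof -
    have "\<And>i. AE d in M2. d i \<notin> Nl" unfolding M2_def
      using AE_PiM_component[of UNIV "\<lambda>_. M" _ "\<lambda>y. y \<notin> Nl"] prob AE_not_in[OF Nlnull] by auto
    hence A2: "AE d in M2. \<forall>i. d i \<notin> Nl" by (simp add: AE_all_countable)
    have "\<And>n. AE c in M1. \<forall>i. c n i \<notin> Nl" unfolding M1_def
      using AE_PiM_component[of UNIV "\<lambda>_. M2" _ "\<lambda>d. \<forall>i. d i \<notin> Nl"] p2 A2 by auto
    thus ?thesis by (simp add: AE_all_countable)
  qed
  have AE2: "AE u in Mu. \<forall>n. u n \<in> {0..<1}"
  proof -
    have Y: "AE y in unif01. y \<in> {0..<1}" unfolding unif01_def by (subst AE_uniform_measure) auto
    have "AE u in Mu. u n \<in> {0..<1}" for n unfolding Mu_def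
      using AE_PiM_component[of UNIV "\<lambda>_. unif01" n "\<lambda>y. y \<in> {0..<1}", OF _ _ Y] pu by blast
    thus ?thesis by (simp add: AE_all_countable)
  qed
  have AE3: "AE c in M1. \<exists>m. \<forall>i<\<kappa> (Suc m). c (Suc m) i \<in> B"
proof -
    interpret P1: prob_space M1 by (rule p1)
    define \<rho> where "\<rho> = measure M B"
    have "emeasure M B > 0" using xs e(1) unfolding supp_measure_def B_def by auto
    hence rpos: "\<rho> > 0" unfolding \<rho>_def using M.emeasure_eq_measure by auto
    have rle: "\<rho> \<le> 1" unfolding \<rho>_def by (rule M.prob_le_1)
    define F where "F n = {d\<in>space M2. \<forall>i\<in>{..<\<kappa> n}. d i \<in> B}" for n
    have Fs[measurable]: "F n \<in> sets M2" for n unfolding F_def M2_def by measurable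
    have mF: "measure M2 (F n) = \<rho> ^ \<kappa> n" for n unfolding F_def M2_def
      by (subst measure_PiM_Collect_UNIV) (auto simp: prob \<rho>_def)
    define A where "A n = space M2 - F n" for n
    have As[measurable]: "A n \<in> sets M2" for n unfolding A_def by auto
    have mA: "measure M2 (A n) = 1 - \<rho> ^ \<kappa> n" for n
      unfolding A_def using prob_space.prob_compl[OF p2 Fs] mF by simp
    define Bad where "Bad = {c\<in>space M1. \<forall>n. c (Suc n) \<in> A (Suc n)}"
    have Bads: "Bad \<in> sets M1" unfolding Bad_def M1_def by measurable
    define a where "a k = \<rho> ^ \<kappa> (Suc k)" for k
    have a0: "0 \<le> a k" for k using rpos by (simp add: a_def)
    have a1: "a k \<le> 1" for k using rpos rle by (simp add: a_def power_le_one)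
    have bound: "measure M1 Bad \<le> exp (- (\<Sum>k\<le>N. a k))" for N
    proof -
      define G where "G = {c\<in>space M1. \<forall>n\<in>Suc ` {..N}. c n \<in> A n}"
      have Gs: "G \<in> sets M1" unfolding G_def M1_def by measurable
      have "Bad \<subseteq> G" unfolding Bad_def G_def by auto
      hence "measure M1 Bad \<le> measure M1 G"
        using Gs by (intro P1.finite_measure_mono) auto
      also have "measure M1 G = (\<Prod>n\<in>Suc ` {..N}. measure M2 (A n))"
        unfolding G_def M1_def by (subst measure_PiM_Collect_UNIV) (auto simp: p2)
      also have "\<dots> = (\<Prod>k\<le>N. 1 - a k)" by (simp add: prod.reindex mA a_def)
      also have "\<dots> \<le> exp (- (\<Sum>k\<le>N. a k))" by (rule prod_exp_bound[OF a0 a1])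
      finally show ?thesis .
    qed
    have ns: "\<not> summable a" using kappa_div rpos rle unfolding a_def by auto
    have m0: "measure M1 Bad = 0"
    proof (rule ccontr)
      assume "measure M1 Bad \<noteq> 0"
      hence pp: "measure M1 Bad > 0" using measure_nonneg[of M1 Bad] by linarith
      obtain N where N: "(\<Sum>k\<le>N. a k) > - ln (measure M1 Bad)"
        using ns bounded_imp_summable[of a "- ln (measure M1 Bad)"] a0 by (meson not_le)
      have "exp (- (\<Sum>k\<le>N. a k)) < exp (ln (measure M1 Bad))" using N by simp
      also have "\<dots> = measure M1 Bad" using pp by simp
      finally show False using bound[of N] by simp
    qed
    have "Bad \<in> null_sets M1"
      using m0 Bads P1.emeasure_eq_measure by (simp add: null_sets_def)
    hence "AE c in M1. c \<notin> Bad" by (rule AE_not_in)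
    thus ?thesis
    proof (rule AE_mp[OF _ AE_I2[OF impI]])
      fix c assume c: "c \<in> space M1" "c \<notin> Bad"
      then obtain n where n: "c (Suc n) \<notin> A (Suc n)" unfolding Bad_def by auto
      have "c (Suc n) \<in> space M2" using c(1) unfolding M1_def by (auto simp: space_PiM)
      hence "c (Suc n) \<in> F (Suc n)" using n unfolding A_def by auto
      thus "\<exists>m. \<forall>i<\<kappa> (Suc m). c (Suc m) i \<in> B" unfolding F_def by auto
    qed
  qed
  have sf1: "sigma_finite_measure (Mu \<Otimes>\<^sub>M Mu)" using pMuu by (rule prob_space_imp_sigma_finite)
  have sf2: "sigma_finite_measure Mu" using pMu by (rule prob_space_imp_sigma_finite)
  have AEall: "AE \<omega> in process_space M. (\<forall>n i. fst \<omega> n i \<notin> Nl) \<and> (\<forall>n. fst (snd \<omega>) n \<in> {0..<1})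
      \<and> (\<forall>n. snd (snd \<omega>) n \<in> {0..<1}) \<and> (\<exists>m. \<forall>i<\<kappa> (Suc m). fst \<omega> (Suc m) i \<in> B)"
    unfolding ps
    using AE_pair_fst[OF sf1 AE1] AE_pair_fst[OF sf1 AE3]
      AE_pair_snd[OF sf1 AE_pair_fst[OF sf2 AE2]] AE_pair_snd[OF sf1 AE_pair_snd[OF sf2 AE2]]
    by eventually_elim auto
  show ?thesis
  proof (rule eventually_mono[OF AEall])
    fix \<omega> :: "(nat \<Rightarrow> nat \<Rightarrow> 'a) \<times> (nat \<Rightarrow> real) \<times> (nat \<Rightarrow> real)"
    assume H: "(\<forall>n i. fst \<omega> n i \<notin> Nl) \<and> (\<forall>n. fst (snd \<omega>) n \<in> {0..<1})
      \<and> (\<forall>n. snd (snd \<omega>) n \<in> {0..<1}) \<and> (\<exists>m. \<forall>i<\<kappa> (Suc m). fst \<omega> (Suc m) i \<in> B)"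
    then obtain m where m: "\<forall>i<\<kappa> (Suc m). fst \<omega> (Suc m) i \<in> B" by blast
    show "eventually (\<lambda>n. zeta f (nonmodal_count f) \<kappa> \<omega> n x = f x) sequentially"
    proof (rule eventually_sequentiallyI[of "Suc m"])
      fix n assume n: "Suc m \<le> n"
      have W: "0 \<le> snd (snd \<omega>) n" "snd (snd \<omega>) n < 1" using H by auto
      show "zeta f (nonmodal_count f) \<kappa> \<omega> n x = f x"
        unfolding zeta_def
        by (rule det[OF e(1) _ _ W kappa_pos _ n]) (use H m in \<open>auto simp: Nl_def B_def\<close>)
    qed
  qed
qed

end
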